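(* Let $\Bbbk$ be a field, $V$ a finite-dimensional $\Bbbk$-vector space with $\dim V>1$ and $R$ a Hecke symmetry on $V$ with parameter $q$. Suppose $\dim\Upsilon^{(3)}=1$. Then the action of $y_3$ on $V^{\otimes3}$ is nonzero.
   Context: A Hecke symmetry on $V$ with parameter $0\neq q\in\Bbbk$ is a linear map $R:V\otimes V\to V\otimes V$ satisfying $(R\otimes\mathrm{Id}_V)(\mathrm{Id}_V\otimes R)(R\otimes\mathrm{Id}_V)=(\mathrm{Id}_V\otimes R)(R\otimes\mathrm{Id}_V)(\mathrm{Id}_V\otimes R)$ and $(R-q\,\mathrm{Id})(R+\mathrm{Id})=0$ ($q=-1$ allowed). On $V^{\otimes 3}$ let $R_1=R\otimes\mathrm{Id}_V$, $R_2=\mathrm{Id}_V\otimes R$. $\Upsilon^{(3)}=(R_1-q\,\mathrm{Id})V^{\otimes3}\cap(R_2-q\,\mathrm{Id})V^{\otimes3}$. $y_3=\sum_{\sigma\in S_3}(-1)^{\ell(\sigma)}q^{3-\ell(\sigma)}T_\sigma$ in the Hecke algebra ${\cal H}_3$ (generators $T_1,T_2$, relations $T_1T_2T_1=T_2T_1T_2$, $(T_i-q)(T_i+1)=0$; $T_\sigma$ is the product of generators along a reduced expression of $\sigma$ in $\tau_1=(12),\tau_2=(23)$, $\ell$ the length), acting on $V^{\otimes3}$ via $T_i\mapsto R_i$. Explicitly $y_3=q^3-q^2(T_1+T_2)+q(T_1T_2+T_2T_1)-T_1T_2T_1$. *)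

theory Defs
  imports Complex_Main "HOL-Library.Function_Algebras"
begin

text \<open>V is the coordinate space over the finite index type 'n (dim V = CARD('n)).
  V\<otimes>V is modelled as 'n \<times> 'n \<Rightarrow> 'k, V\<otimes>V\<otimes>V as 'n \<times> 'n \<times> 'n \<Rightarrow> 'k.
  A linear map R on V\<otimes>V is given by its matrix R (i,j) (k,l).\<close>

type_synonym ('k,'n) lin2 = "'n \<times> 'n \<Rightarrow> 'n \<times> 'n \<Rightarrow> 'k"

definition scalef :: "'k::field \<Rightarrow> ('a \<Rightarrow> 'k) \<Rightarrow> ('a \<Rightarrow> 'k)" where
  "scalef c f = (\<lambda>x. c * f x)"

definition app2 :: "('k::field,'n::finite) lin2 \<Rightarrow> ('n \<times> 'n \<Rightarrow> 'k) \<Rightarrow> ('n \<times> 'n \<Rightarrow> 'k)" where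
  "app2 R x = (\<lambda>p. \<Sum>r\<in>UNIV. R p r * x r)"

text \<open>R1 = R \<otimes> Id and R2 = Id \<otimes> R on V\<otimes>V\<otimes>V.\<close>
definition Rone :: "('k::field,'n::finite) lin2 \<Rightarrow> ('n \<times> 'n \<times> 'n \<Rightarrow> 'k) \<Rightarrow> ('n \<times> 'n \<times> 'n \<Rightarrow> 'k)" where
  "Rone R t = (\<lambda>(i,j,m). \<Sum>(k,l)\<in>UNIV. R (i,j) (k,l) * t (k,l,m))"

definition Rtwo :: "('k::field,'n::finite) lin2 \<Rightarrow> ('n \<times> 'n \<times> 'n \<Rightarrow> 'k) \<Rightarrow> ('n \<times> 'n \<times> 'n \<Rightarrow> 'k)" where
  "Rtwo R t = (\<lambda>(i,j,m). \<Sum>(k,l)\<in>UNIV. R (j,m) (k,l) * t (i,k,l))"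

definition hecke_symmetry :: "('k::field,'n::finite) lin2 \<Rightarrow> 'k \<Rightarrow> bool" where
  "hecke_symmetry R q \<longleftrightarrow>
     (\<forall>t. Rone R (Rtwo R (Rone R t)) = Rtwo R (Rone R (Rtwo R t))) \<and>
     (\<forall>x. app2 R (app2 R x + x) - scalef q (app2 R x + x) = 0)"

definition Upsilon3 :: "('k::field,'n::finite) lin2 \<Rightarrow> 'k \<Rightarrow> ('n \<times> 'n \<times> 'n \<Rightarrow> 'k) set" where
  "Upsilon3 R q = {t. (\<exists>s. t = Rone R s - scalef q s) \<and> (\<exists>s. t = Rtwo R s - scalef q s)}"

definition y3 :: "('k::field,'n::finite) lin2 \<Rightarrow> 'k \<Rightarrow> ('n \<times> 'n \<times> 'n \<Rightarrow> 'k) \<Rightarrow> ('n \<times> 'n \<times> 'n \<Rightarrow> 'k)" where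
  "y3 R q t = scalef (q^3) t - scalef (q^2) (Rone R t + Rtwo R t)
     + scalef q (Rone R (Rtwo R t) + Rtwo R (Rone R t)) - Rone R (Rtwo R (Rone R t))"

end

theory Submission
  imports Defs
begin


lemma vs_scalef: "vector_space (scalef :: 'k::field \<Rightarrow> ('a \<Rightarrow> 'k) \<Rightarrow> _)"
  by unfold_locales (auto simp: scalef_def fun_eq_iff algebra_simps)

lemma Rone_lin:
  "Rone R (x + y) = Rone R x + Rone R y"
  "Rone R (x - y) = Rone R x - Rone R y"
  "Rone R (scalef c x) = scalef c (Rone R x)"
  by (auto simp: Rone_def scalef_def fun_eq_iff sum.distrib sum_subtractf sum_distrib_left
      ring_distribs mult.left_commute split_beta)

lemma Rtwo_lin:
  "Rtwo R (x + y) = Rtwo R x + Rtwo R y"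
  "Rtwo R (x - y) = Rtwo R x - Rtwo R y"
  "Rtwo R (scalef c x) = scalef c (Rtwo R x)"
  by (auto simp: Rtwo_def scalef_def fun_eq_iff sum.distrib sum_subtractf sum_distrib_left
      ring_distribs mult.left_commute split_beta)

lemma app2_add: "app2 R (x + y) = app2 R x + app2 R y"
  by (auto simp: app2_def fun_eq_iff sum.distrib ring_distribs)

lemma Rone_app2: "Rone R t (i,j,m) = app2 R (\<lambda>(k,l). t(k,l,m)) (i,j)"
  by (simp add: Rone_def app2_def split_beta)

lemma quad:
  assumes "hecke_symmetry R q"
  shows "app2 R (app2 R x) p = (q - 1) * app2 R x p + q * x p"
proof -
  have "app2 R (app2 R x + x) - scalef q (app2 R x + x) = 0"
    using assms unfolding hecke_symmetry_def by blast
  then have "(app2 R (app2 R x + x) - scalef q (app2 R x + x)) p = 0"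
    by simp
  then have "app2 R (app2 R x + x) p - q * (app2 R x p + x p) = 0"
    by (simp add: scalef_def)
  then show ?thesis by (simp add: app2_add algebra_simps)
qed

lemma Rone_sq:
  assumes "hecke_symmetry R q"
  shows "Rone R (Rone R t) = scalef (q - 1) (Rone R t) + scalef q t"
proof (rule ext, clarify)
  fix i j m
  have e: "(\<lambda>(k, l). Rone R t (k, l, m)) = app2 R (\<lambda>(k,l). t(k,l,m))"
    by (auto simp: Rone_app2 fun_eq_iff)
  show "Rone R (Rone R t) (i, j, m) = (scalef (q - 1) (Rone R t) + scalef q t) (i, j, m)"
    unfolding Rone_app2[of R "Rone R t"] e
    by (simp add: quad[OF assms] scalef_def Rone_app2)
qed

definition N1 where "N1 R q t = scalef q t - Rone R t"
definition N2 where "N2 R q t = scalef q t - Rtwo R t"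

lemma key3:
  assumes "hecke_symmetry R q"
  shows "N1 R q (N2 R q (N1 R q t)) = y3 R q t + scalef q (N1 R q t)"
  unfolding N1_def N2_def y3_def
  by (simp add: Rone_lin Rtwo_lin Rone_sq[OF assms])
    (simp add: fun_eq_iff scalef_def algebra_simps power2_eq_square power3_eq_cube)




definition liftL :: "(('n\<times>'n\<times>'n \<Rightarrow> 'k) \<Rightarrow> ('n\<times>'n\<times>'n \<Rightarrow> 'k)) \<Rightarrow> ('n\<times>'n\<times>'n\<times>'n \<Rightarrow> 'k) \<Rightarrow> 'n\<times>'n\<times>'n\<times>'n \<Rightarrow> 'k"
  where "liftL F w = (\<lambda>(a,b,c,d). F (\<lambda>(x,y,z). w(x,y,z,d)) (a,b,c))"
definition liftR :: "(('n\<times>'n\<times>'n \<Rightarrow> 'k) \<Rightarrow> ('n\<times>'n\<times>'n \<Rightarrow> 'k)) \<Rightarrow> ('n\<times>'n\<times>'n\<times>'n \<Rightarrow> 'k) \<Rightarrow> 'n\<times>'n\<times>'n\<times>'n \<Rightarrow> 'k"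
  where "liftR F w = (\<lambda>(a,b,c,d). F (\<lambda>(x,y,z). w(a,x,y,z)) (b,c,d))"

lemma liftL_app: "liftL F w (a,b,c,d) = F (\<lambda>(x,y,z). w(x,y,z,d)) (a,b,c)"
  by (simp add: liftL_def)
lemma liftR_app: "liftR F w (a,b,c,d) = F (\<lambda>(x,y,z). w(a,x,y,z)) (b,c,d)"
  by (simp add: liftR_def)

lemma liftL_comp: "liftL F (liftL G w) = liftL (\<lambda>t. F (G t)) w"
proof -
  have e: "(\<lambda>(x,y,z). liftL G w (x,y,z,d)) = G (\<lambda>(x,y,z). w(x,y,z,d))" for d
    by (auto simp: liftL_app fun_eq_iff)
  show ?thesis by (auto simp: fun_eq_iff liftL_app e)
qed

lemma liftR_comp: "liftR F (liftR G w) = liftR (\<lambda>t. F (G t)) w"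
proof -
  have e: "(\<lambda>(x,y,z). liftR G w (a,x,y,z)) = G (\<lambda>(x,y,z). w(a,x,y,z))" for a
    by (auto simp: liftR_app fun_eq_iff)
  show ?thesis by (auto simp: fun_eq_iff liftR_app e)
qed

lemma liftL_scal:
  assumes "\<And>t. F (scalef c t) = scalef c (F t)"
  shows "liftL F (scalef c w) = scalef c (liftL F w)"
proof -
  have e: "(\<lambda>(x,y,z). scalef c w (x,y,z,d)) = scalef c (\<lambda>(x,y,z). w(x,y,z,d))" for d
    by (auto simp: scalef_def fun_eq_iff)
  show ?thesis by (auto simp: fun_eq_iff liftL_app e assms) (simp add: scalef_def liftL_def)
qed

lemma liftR_scal:
  assumes "\<And>t. F (scalef c t) = scalef c (F t)"
  shows "liftR F (scalef c w) = scalef c (liftR F w)"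
proof -
  have e: "(\<lambda>(x,y,z). scalef c w (a,x,y,z)) = scalef c (\<lambda>(x,y,z). w(a,x,y,z))" for a
    by (auto simp: scalef_def fun_eq_iff)
  show ?thesis by (auto simp: fun_eq_iff liftR_app e assms) (simp add: scalef_def liftR_def)
qed

lemma liftL_scalq: "liftL (\<lambda>t. scalef c (F t)) w = scalef c (liftL F w)"
  by (auto simp: fun_eq_iff liftL_app scalef_def)
lemma liftR_scalq: "liftR (\<lambda>t. scalef c (F t)) w = scalef c (liftR F w)"
  by (auto simp: fun_eq_iff liftR_app scalef_def)

lemma N1_scal: "N1 R q (scalef c t) = scalef c (N1 R q t)"
  by (simp add: N1_def Rone_lin) (simp add: scalef_def fun_eq_iff algebra_simps)
lemma N2_scal: "N2 R q (scalef c t) = scalef c (N2 R q t)"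
  by (simp add: N2_def Rtwo_lin) (simp add: scalef_def fun_eq_iff algebra_simps)

lemma mid_eq: "liftL (N2 R q) w = liftR (N1 R q) w"
  by (auto simp: fun_eq_iff liftL_app liftR_app N1_def N2_def Rone_def Rtwo_def scalef_def split_beta)

lemma core_comm: "liftL (Rone R) (liftR (Rtwo R) w) = liftR (Rtwo R) (liftL (Rone R) w)"
proof (rule ext, clarify)
  fix a b c d
  have "liftL (Rone R) (liftR (Rtwo R) w) (a,b,c,d) =
     (\<Sum>p\<in>UNIV. \<Sum>p'\<in>UNIV. R (a,b) p * (R (c,d) p' * w (fst p, snd p, fst p', snd p')))"
    by (simp add: liftL_app liftR_app Rone_def Rtwo_def split_beta sum_distrib_left)
  also have "\<dots> = (\<Sum>p'\<in>UNIV. \<Sum>p\<in>UNIV. R (a,b) p * (R (c,d) p' * w (fst p, snd p, fst p', snd p')))"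
    by (rule sum.swap)
  also have "\<dots> = liftR (Rtwo R) (liftL (Rone R) w) (a,b,c,d)"
    by (simp add: liftL_app liftR_app Rone_def Rtwo_def split_beta sum_distrib_left mult.left_commute)
  finally show "liftL (Rone R) (liftR (Rtwo R) w) (a,b,c,d) = liftR (Rtwo R) (liftL (Rone R) w) (a,b,c,d)" .
qed

lemma liftL_N1: "liftL (N1 R q) w = scalef q w - liftL (Rone R) w"
  by (auto simp: fun_eq_iff liftL_app N1_def scalef_def)
lemma liftR_N2: "liftR (N2 R q) w = scalef q w - liftR (Rtwo R) w"
  by (auto simp: fun_eq_iff liftR_app N2_def scalef_def)
lemma liftL_Rone_lin: "liftL (Rone R) (x - y) = liftL (Rone R) x - liftL (Rone R) y"
  "liftL (Rone R) (scalef c x) = scalef c (liftL (Rone R) x)"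
proof -
  have e: "(\<lambda>(x',y',z'). (x - y) (x',y',z',d)) = (\<lambda>(x',y',z'). x (x',y',z',d)) - (\<lambda>(x',y',z'). y (x',y',z',d))" for d
    by (auto simp: fun_eq_iff)
  show "liftL (Rone R) (x - y) = liftL (Rone R) x - liftL (Rone R) y"
    by (auto simp: fun_eq_iff liftL_app Rone_def split_beta sum_subtractf ring_distribs)
  show "liftL (Rone R) (scalef c x) = scalef c (liftL (Rone R) x)"
    by (rule liftL_scal) (simp add: Rone_lin)
qed
lemma liftR_Rtwo_lin: "liftR (Rtwo R) (x - y) = liftR (Rtwo R) x - liftR (Rtwo R) y"
  "liftR (Rtwo R) (scalef c x) = scalef c (liftR (Rtwo R) x)"
proof -
  have e: "(\<lambda>(x',y',z'). (x - y) (d,x',y',z')) = (\<lambda>(x',y',z'). x (d,x',y',z')) - (\<lambda>(x',y',z'). y (d,x',y',z'))" for d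
    by (auto simp: fun_eq_iff)
  show "liftR (Rtwo R) (x - y) = liftR (Rtwo R) x - liftR (Rtwo R) y"
    by (auto simp: fun_eq_iff liftR_app Rtwo_def split_beta sum_subtractf ring_distribs)
  show "liftR (Rtwo R) (scalef c x) = scalef c (liftR (Rtwo R) x)"
    by (rule liftR_scal) (simp add: Rtwo_lin)
qed

lemma comm: "liftL (N1 R q) (liftR (N2 R q) w) = liftR (N2 R q) (liftL (N1 R q) w)"
  by (simp add: liftL_N1 liftR_N2 liftL_Rone_lin liftR_Rtwo_lin core_comm)
     (simp add: fun_eq_iff scalef_def algebra_simps)




lemma Rtwo_app2: "Rtwo R t (i,j,m) = app2 R (\<lambda>(k,l). t(i,k,l)) (j,m)"
  by (simp add: Rtwo_def app2_def split_beta)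

lemma Rtwo_sq:
  assumes "hecke_symmetry R q"
  shows "Rtwo R (Rtwo R t) = scalef (q - 1) (Rtwo R t) + scalef q t"
proof (rule ext, clarify)
  fix i j m
  have e: "(\<lambda>(k, l). Rtwo R t (i, k, l)) = app2 R (\<lambda>(k,l). t(i,k,l))"
    by (auto simp: Rtwo_app2 fun_eq_iff)
  show "Rtwo R (Rtwo R t) (i, j, m) = (scalef (q - 1) (Rtwo R t) + scalef q t) (i, j, m)"
    unfolding Rtwo_app2[of R "Rtwo R t"] e
    by (simp add: quad[OF assms] scalef_def Rtwo_app2)
qed

lemma final_contra:
  fixes u :: "'n\<times>'n\<times>'n \<Rightarrow> 'k::field" and i j :: 'n
  assumes u0: "u \<noteq> 0" and ij: "i \<noteq> j"
    and H: "\<And>(v::'n \<Rightarrow> 'k) a. \<exists>k. (\<lambda>(b,c,d). u(a,b,c) * v d) = scalef k u"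
  shows False
proof -
  obtain a0 b0 c0 where p0: "u (a0,b0,c0) \<noteq> 0" using u0
    by (metis ext prod_cases3 zero_fun_apply)
  obtain k where k: "(\<lambda>(b,c,d). u(a0,b,c) * (if d = i then 1 else 0)) = scalef k u"
    using H[where v="\<lambda>d. if d = i then 1 else 0" and a=a0] by blast
  obtain k' where k': "(\<lambda>(b,c,d). u(a0,b,c) * (if d = j then 1 else 0)) = scalef k' u"
    using H[where v="\<lambda>d. if d = j then 1 else 0" and a=a0] by blast
  have e1: "u(a0,b0,c0) = k * u(b0,c0,i)" using fun_cong[OF k, of "(b0,c0,i)"] by (simp add: scalef_def)
  have e2: "0 = k * u(b0,c0,j)" using fun_cong[OF k, of "(b0,c0,j)"] ij by (simp add: scalef_def)
  have e3: "u(a0,b0,c0) = k' * u(b0,c0,j)" using fun_cong[OF k', of "(b0,c0,j)"] by (simp add: scalef_def)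
  from e1 p0 have "k \<noteq> 0" by auto
  with e2 have "u(b0,c0,j) = 0" by simp
  with e3 p0 show False by simp
qed

lemma in_Ups:
  assumes "N1 R q t = scalef (q+1) t" "N2 R q t = scalef (q+1) t" "q + 1 \<noteq> 0"
  shows "t \<in> Upsilon3 R q"
proof -
  have h1: "q * t x - Rone R t x = (q+1) * t x" for x
    using fun_cong[OF assms(1)[unfolded N1_def], of x] by (simp add: scalef_def)
  have "Rone R t x = - t x" for x using h1[of x] by algebra
  then have r1: "Rone R t = scalef (-1) t"
    by (auto simp: fun_eq_iff scalef_def)
  have h2: "q * t x - Rtwo R t x = (q+1) * t x" for x
    using fun_cong[OF assms(2)[unfolded N2_def], of x] by (simp add: scalef_def)
  have "Rtwo R t x = - t x" for x using h2[of x] by algebra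
  then have r2: "Rtwo R t = scalef (-1) t"
    by (auto simp: fun_eq_iff scalef_def)
  define c where "c = -1/(q+1)"
  have c: "c * (q+1) = -1" using assms(3) by (simp add: c_def)
  have pw: "c * (- y) - q * (c * y) = y" for y :: 'b
  proof -
    have "c * (- y) - q * (c * y) = - (c * (q+1)) * y" by (simp add: algebra_simps)
    also have "\<dots> = y" using c by simp
    finally show ?thesis .
  qed
  have pw2: "- (c * y) - q * (c * y) = y" for y :: 'b using pw[of y] by simp
  let ?s = "scalef c t"
  have "t = Rone R ?s - scalef q ?s"
    by (simp add: Rone_lin r1) (simp add: scalef_def fun_eq_iff pw pw2)
  moreover have "t = Rtwo R ?s - scalef q ?s"
    by (simp add: Rtwo_lin r2) (simp add: scalef_def fun_eq_iff pw pw2)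
  ultimately show ?thesis unfolding Upsilon3_def by blast
qed




lemma key4L:
  assumes "hecke_symmetry R q" "\<And>t. y3 R q t = 0"
  shows "liftL (N1 R q) (liftL (N2 R q) (liftL (N1 R q) w)) = scalef q (liftL (N1 R q) w)"
proof -
  have e: "N1 R q (N2 R q (N1 R q t)) = scalef q (N1 R q t)" for t
    using key3[OF assms(1), of t] assms(2)[of t] by simp
  show ?thesis by (simp add: liftL_comp e liftL_scalq)
qed

lemma key4R:
  assumes "hecke_symmetry R q" "\<And>t. y3 R q t = 0"
  shows "liftR (N1 R q) (liftR (N2 R q) (liftR (N1 R q) w)) = scalef q (liftR (N1 R q) w)"
proof -
  have e: "N1 R q (N2 R q (N1 R q t)) = scalef q (N1 R q t)" for t
    using key3[OF assms(1), of t] assms(2)[of t] by simp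
  show ?thesis by (simp add: liftR_comp e liftR_scalq)
qed

lemma lift_scals:
  "liftL (N1 R q) (scalef c w) = scalef c (liftL (N1 R q) w)"
  "liftL (N2 R q) (scalef c w) = scalef c (liftL (N2 R q) w)"
  "liftR (N1 R q) (scalef c w) = scalef c (liftR (N1 R q) w)"
  "liftR (N2 R q) (scalef c w) = scalef c (liftR (N2 R q) w)"
    apply (rule liftL_scal, rule N1_scal)
   apply (rule liftL_scal, rule N2_scal)
  apply (rule liftR_scal, rule N1_scal)
  by (rule liftR_scal, rule N2_scal)

lemma dim1_elem:
  assumes "vector_space.dim (scalef :: 'k::field \<Rightarrow> ('a \<Rightarrow> 'k) \<Rightarrow> _) U = 1"
  shows "\<exists>u. u \<in> U \<and> u \<noteq> 0 \<and> (\<forall>t\<in>U. \<exists>k. t = scalef k u)"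
proof -
  interpret vs: vector_space "scalef :: 'k \<Rightarrow> ('a \<Rightarrow> 'k) \<Rightarrow> _"
    by (rule vs_scalef)
  obtain B where B: "B \<subseteq> U" "vs.independent B" "U \<subseteq> vs.span B"
    "card B = vs.dim U"
    using vs.basis_exists by blast
  then have "card B = 1" using assms by simp
  then obtain u where Bu: "B = {u}" by (auto simp: card_Suc_eq)
  have uU: "u \<in> U" using B Bu by auto
  have u0: "u \<noteq> 0" using B(2) Bu vs.dependent_single by auto
  have multu: "\<exists>k. t = scalef k u" if "t \<in> U" for t
    using B(3) Bu that vs.span_singleton by auto
  show ?thesis using uU u0 multu by blast
qed

theorem corollary2p7:
  fixes R :: "('k::field,'n::finite) lin2" and q :: 'k
  assumes "card (UNIV :: 'n set) > 1"
    and "q \<noteq> 0"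
    and "hecke_symmetry R q"
    and "vector_space.dim (scalef :: 'k \<Rightarrow> ('n \<times> 'n \<times> 'n \<Rightarrow> 'k) \<Rightarrow> _) (Upsilon3 R q) = 1"
  shows "y3 R q \<noteq> (\<lambda>t. 0)"
proof
  assume y0: "y3 R q = (\<lambda>t. 0)"
  have y0': "y3 R q t = 0" for t using fun_cong[OF y0, of t] by simp
  obtain u where uU: "u \<in> Upsilon3 R q" and u0: "u \<noteq> 0"
    and multu: "\<And>t. t \<in> Upsilon3 R q \<Longrightarrow> \<exists>k. t = scalef k u"
    using dim1_elem[OF assms(4)] by blast
  from uU obtain s1 where s1: "u = Rone R s1 - scalef q s1" unfolding Upsilon3_def by blast
  from uU obtain s2 where s2: "u = Rtwo R s2 - scalef q s2" unfolding Upsilon3_def by blast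
  have Ru1: "Rone R u = scalef (-1) u"
    unfolding s1 by (simp add: Rone_lin Rone_sq[OF assms(3)]) (simp add: fun_eq_iff scalef_def algebra_simps)
  have Ru2: "Rtwo R u = scalef (-1) u"
    unfolding s2 by (simp add: Rtwo_lin Rtwo_sq[OF assms(3)]) (simp add: fun_eq_iff scalef_def algebra_simps)
  have N1u: "N1 R q (scalef c u) = scalef (c*(q+1)) u" for c
    by (simp add: N1_def Rone_lin Ru1) (simp add: fun_eq_iff scalef_def algebra_simps)
  have N2u: "N2 R q (scalef c u) = scalef (c*(q+1)) u" for c
    by (simp add: N2_def Rtwo_lin Ru2) (simp add: fun_eq_iff scalef_def algebra_simps)
  obtain p0 where p0: "u p0 \<noteq> 0" using u0 by (auto simp: fun_eq_iff)
  have q1: "q + 1 \<noteq> 0"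
  proof
    assume q: "q + 1 = 0"
    have n1: "N1 R q s1 = scalef (-1) u" by (simp add: s1 N1_def fun_eq_iff scalef_def)
    have "N1 R q (N2 R q (N1 R q s1)) = scalef q (N1 R q s1)"
      using key3[OF assms(3), of s1] y0' by simp
    then have "scalef ((-1) * (q+1) * (q+1)) u = scalef q (scalef (-1) u)"
      by (simp add: n1 N1u N2u)
    from fun_cong[OF this, of p0] have "(-1) * (q+1) * (q+1) * u p0 = q * ((-1) * u p0)"
      by (simp add: scalef_def)
    with q p0 show False by simp
  qed
  have slice: "\<exists>k. (\<lambda>(b,c,d). u(a,b,c) * v d) = scalef k u" for v :: "'n \<Rightarrow> 'k" and a
  proof -
    define w where "w = (\<lambda>(a,b,c,d). u(a,b,c) * v d)"
    have sl: "(\<lambda>(x,y,z). w(x,y,z,d)) = scalef (v d) u" for d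
      by (auto simp: w_def scalef_def fun_eq_iff)
    have M1w: "liftL (N1 R q) w = scalef (q+1) w"
    proof (rule ext, clarify)
      fix a1 b1 c1 d1
      have "liftL (N1 R q) w (a1,b1,c1,d1) = N1 R q (scalef (v d1) u) (a1,b1,c1)"
        by (simp only: liftL_app sl)
      also have "\<dots> = (v d1 * (q+1)) * u (a1,b1,c1)" by (simp only: N1u) (simp add: scalef_def)
      also have "\<dots> = scalef (q+1) w (a1,b1,c1,d1)" by (simp add: w_def scalef_def algebra_simps)
      finally show "liftL (N1 R q) w (a1,b1,c1,d1) = scalef (q+1) w (a1,b1,c1,d1)" .
    qed
    have M2w: "liftL (N2 R q) w = scalef (q+1) w"
    proof (rule ext, clarify)
      fix a1 b1 c1 d1
      have "liftL (N2 R q) w (a1,b1,c1,d1) = N2 R q (scalef (v d1) u) (a1,b1,c1)"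
        by (simp only: liftL_app sl)
      also have "\<dots> = (v d1 * (q+1)) * u (a1,b1,c1)" by (simp only: N2u) (simp add: scalef_def)
      also have "\<dots> = scalef (q+1) w (a1,b1,c1,d1)" by (simp add: w_def scalef_def algebra_simps)
      finally show "liftL (N2 R q) w (a1,b1,c1,d1) = scalef (q+1) w (a1,b1,c1,d1)" .
    qed
    have M2w': "liftR (N1 R q) w = scalef (q+1) w"
      using M2w by (simp add: mid_eq)
    define z where "z = liftR (N2 R q) w"
    have c1: "liftL (N1 R q) z = scalef (q+1) z"
      unfolding z_def comm M1w by (rule lift_scals)
    have "liftR (N1 R q) (liftR (N2 R q) (liftR (N1 R q) w)) = scalef q (liftR (N1 R q) w)"
      by (rule key4R[OF assms(3) y0'])
    then have e2: "scalef (q+1) (liftR (N1 R q) z) = scalef q (scalef (q+1) w)"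
      by (simp add: M2w' z_def lift_scals)
    have "(q+1) * liftR (N1 R q) z p = (q+1) * (q * w p)" for p
      using fun_cong[OF e2, of p] by (simp add: scalef_def algebra_simps)
    then have c2: "liftR (N1 R q) z = scalef q w"
      using q1 by (auto simp: fun_eq_iff scalef_def)
    have c2': "liftL (N2 R q) z = scalef q w" using c2 by (simp add: mid_eq)
    have "liftL (N1 R q) (liftL (N2 R q) (liftL (N1 R q) z)) = scalef q (liftL (N1 R q) z)"
      by (rule key4L[OF assms(3) y0'])
    then have e3: "scalef (q+1) (scalef q (scalef (q+1) w)) = scalef q (scalef (q+1) z)"
      by (simp add: c1 c2' M1w lift_scals)
    have "(q * (q+1)) * ((q+1) * w p) = (q * (q+1)) * z p" for p
      using fun_cong[OF e3, of p] by (simp add: scalef_def algebra_simps)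
    then have zw: "z = scalef (q+1) w"
      using q1 assms(2) by (auto simp: fun_eq_iff scalef_def)
    define t where "t = (\<lambda>(x,y,z). w(a,x,y,z))"
    have Nt2: "N2 R q t = scalef (q+1) t"
    proof (rule ext, clarify)
      fix b c d
      show "N2 R q t (b,c,d) = scalef (q+1) t (b,c,d)"
        using fun_cong[OF zw, of "(a,b,c,d)"] by (simp add: z_def liftR_app t_def scalef_def)
    qed
    have Nt1: "N1 R q t = scalef (q+1) t"
    proof (rule ext, clarify)
      fix b c d
      show "N1 R q t (b,c,d) = scalef (q+1) t (b,c,d)"
        using fun_cong[OF M2w', of "(a,b,c,d)"] by (simp add: liftR_app t_def scalef_def)
    qed
    have "t \<in> Upsilon3 R q" by (rule in_Ups[OF Nt1 Nt2 q1])
    then obtain k where "t = scalef k u" using multu by blast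
    moreover have "t = (\<lambda>(b,c,d). u(a,b,c) * v d)" by (auto simp: t_def w_def fun_eq_iff)
    ultimately show ?thesis by auto
  qed
  obtain i j :: 'n where ij: "i \<noteq> j"
    using assms(1) card_le_Suc0_iff_eq[of "UNIV :: 'n set"] by force
  show False by (rule final_contra[OF u0 ij slice])
qed


end
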